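(* Let $k\ge2$ be an integer. For every online 1-bounded space $k$-cardinality constrained algorithm $ALG$ and every integer $m\ge3$, there exists an item sequence $I$ such that $OPT_k(I)=m$ and: (A) if $k=2$, $ALG(I)\ge2\cdot OPT_k(I)-2$; (B) if $k\ge3$, $ALG(I)\ge\left(3-\frac2k\right)\cdot OPT_k(I)-5+\frac5k$.
   Context: The $k$-cardinality constrained bin packing problem: an item sequence $I=(a_1,\dots,a_n)\in(0,1]^n$ must be packed into bins of capacity $1$ with at most $k$ items per bin; $OPT_k(I)$ is the minimum number of non-empty bins, $ALG(I)$ the number used by $ALG$. A $k$-cardinality constrained algorithm always outputs packings with at most $k$ items per bin. An online algorithm processes the items in the given order, irrevocably packing each item into a bin before seeing any later item. A bin is open if it contains an item and may still receive items; closed bins never receive further items. A 1-bounded space algorithm keeps at most one open bin at any time, so each item goes either into the most recently opened bin or into a new bin. *)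

theory Defs
  imports Complex_Main
begin

text \<open>A deterministic online 1-bounded space algorithm is modelled by its decision
function A: given the items seen so far (the prefix pre) and the current item x,
A pre x = True means "close the current open bin (if any) and put x into a new bin",
A pre x = False means "put x into the current open bin".  Since the algorithm is
deterministic, its earlier decisions are determined by the prefix, so this captures
all online 1-bounded space algorithms.  The state is
(number of bins used, load of the open bin, number of items in the open bin).\<close>

type_synonym online_alg = "real list \<Rightarrow> real \<Rightarrow> bool"

primrec pack_run :: "online_alg \<Rightarrow> real list \<Rightarrow> real list \<Rightarrow> nat \<times> real \<times> nat \<Rightarrow> nat \<times> real \<times> nat" where
  "pack_run A pre [] s = s"
| "pack_run A pre (x # xs) s =
     (case s of (b, l, c) \<Rightarrow>
        if 0 < b \<and> \<not> A pre x
        then pack_run A (pre @ [x]) xs (b, l + x, Suc c)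
        else pack_run A (pre @ [x]) xs (Suc b, x, 1))"

definition run :: "online_alg \<Rightarrow> real list \<Rightarrow> nat \<times> real \<times> nat" where
  "run A xs = pack_run A [] xs (0, 0, 0)"

definition ALG :: "online_alg \<Rightarrow> real list \<Rightarrow> nat" where
  "ALG A I = fst (run A I)"

definition valid_items :: "real list \<Rightarrow> bool" where
  "valid_items I \<longleftrightarrow> (\<forall>x\<in>set I. 0 < x \<and> x \<le> 1)"

definition valid_alg :: "nat \<Rightarrow> online_alg \<Rightarrow> bool" where
  "valid_alg k A \<longleftrightarrow>
     (\<forall>pre x. valid_items (pre @ [x]) \<longrightarrow>
        (case run A pre of (b, l, c) \<Rightarrow>
           (0 < b \<and> \<not> A pre x) \<longrightarrow> l + x \<le> 1 \<and> c < k))"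

definition feasible_packing :: "nat \<Rightarrow> real list \<Rightarrow> nat \<Rightarrow> bool" where
  "feasible_packing k I m \<longleftrightarrow>
     (\<exists>f :: nat \<Rightarrow> nat. (\<forall>i<length I. f i < m) \<and>
        (\<forall>j<m. (\<Sum>i\<in>{i. i < length I \<and> f i = j}. I ! i) \<le> 1 \<and>
               card {i. i < length I \<and> f i = j} \<le> k))"

definition OPT :: "nat \<Rightarrow> real list \<Rightarrow> nat" where
  "OPT k I = (LEAST m. feasible_packing k I m)"

end

theory Submission
  imports Defs
begin


lemma pack_run_append:
  "pack_run A pre (xs @ ys) s = pack_run A (pre @ xs) ys (pack_run A pre xs s)"
  by (induction xs arbitrary: pre s) (auto split: prod.split)

lemma run_snoc: "run A (xs @ [x]) = (case run A xs of (b, l, c) \<Rightarrow>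
   if 0 < b \<and> \<not> A xs x then (b, l + x, Suc c) else (Suc b, x, 1))"
  unfolding run_def pack_run_append by (simp split: prod.split)

lemma valid_items_appendD: "valid_items (xs @ ys) \<Longrightarrow> valid_items xs \<and> valid_items ys"
  by (auto simp: valid_items_def)

lemma run_inv:
  assumes va: "valid_alg k A" and "valid_items xs" and k1: "1 \<le> k"
  shows "case run A xs of (b,l,c) \<Rightarrow> (xs = [] \<longrightarrow> b = 0) \<and>
     (xs \<noteq> [] \<longrightarrow> 0 < b \<and> c \<le> k \<and> length xs + k \<le> b*k + c \<and> last xs \<le> l)"
  using assms(2)
proof (induction xs rule: rev_induct)
  case Nil
  then show ?case by (simp add: run_def)
next
  case (snoc x xs)
  have vxs: "valid_items xs" using snoc.prems valid_items_appendD by blast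
  have xpos: "0 < x" using snoc.prems by (auto simp: valid_items_def)
  obtain b l c where r: "run A xs = (b,l,c)" by (metis prod_cases3)
  note IH = snoc.IH[OF vxs, unfolded r, simplified]
  show ?case
  proof (cases "0 < b \<and> \<not> A xs x")
    case True
    have "l + x \<le> 1 \<and> c < k" using va snoc.prems True r unfolding valid_alg_def by fastforce
    moreover have "xs \<noteq> []" using IH True by auto
    moreover have "0 < last xs" using vxs \<open>xs \<noteq> []\<close> by (auto simp: valid_items_def)
    ultimately show ?thesis using IH True r xpos by (simp add: run_snoc)
  next
    case False
    have "length xs \<le> b * k"
    proof (cases "xs = []")
      case True then show ?thesis by simp
    next
      case False then show ?thesis using IH by auto
    qed
    then show ?thesis using False r k1 by (auto simp: run_snoc)
  qed
qed

lemma run_len: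
  assumes "valid_alg k A" "valid_items xs" "1 \<le> k"
  shows "length xs \<le> fst (run A xs) * k"
  using run_inv[OF assms] by (cases "run A xs") (auto split: if_splits)

lemma run_step:
  assumes va: "valid_alg k A" and v: "valid_items (xs @ [x])" and k1: "1 \<le> k"
  shows "fst (run A xs) + (if xs = [] \<or> last xs + x > 1 then 1 else 0) \<le> fst (run A (xs @ [x]))"
proof -
  have vxs: "valid_items xs" using v valid_items_appendD by blast
  obtain b l c where r: "run A xs = (b,l,c)" by (metis prod_cases3)
  note I = run_inv[OF va vxs k1, unfolded r, simplified]
  show ?thesis
  proof (cases "0 < b \<and> \<not> A xs x")
    case True
    have "l + x \<le> 1 \<and> c < k" using va v True r unfolding valid_alg_def by fastforce
    moreover have "xs \<noteq> []" using I True by auto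
    moreover have "last xs \<le> l" using I \<open>xs \<noteq> []\<close> by auto
    ultimately have "\<not> (xs = [] \<or> last xs + x > 1)" by auto
    moreover have "fst (run A (xs @ [x])) = b" using True r by (simp add: run_snoc)
    ultimately show ?thesis using r by simp
  next
    case False
    then show ?thesis using r by (simp add: run_snoc)
  qed
qed

lemma run_chain:
  assumes va: "valid_alg k A" and k1: "1 \<le> k"
  shows "valid_items (xs @ ys) \<Longrightarrow> (\<forall>i. Suc i < length ys \<longrightarrow> ys!i + ys!Suc i > 1) \<Longrightarrow>
    fst (run A xs) + length ys \<le> fst (run A (xs @ ys)) + (if xs = [] \<or> ys = [] then 0 else 1)"
proof (induction ys rule: rev_induct)
  case Nil
  then show ?case by simp
next
  case (snoc y ys)
  have v1: "valid_items (xs @ ys)" using snoc.prems(1) valid_items_appendD[of "xs@ys" "[y]"] by simp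
  have c1: "\<forall>i. Suc i < length ys \<longrightarrow> ys!i + ys!Suc i > 1"
  proof (intro allI impI)
    fix i assume "Suc i < length ys"
    then show "ys!i + ys!Suc i > 1" using snoc.prems(2)[rule_format, of i] by (simp add: nth_append)
  qed
  note IH = snoc.IH[OF v1 c1]
  have st: "fst (run A (xs@ys)) + (if xs@ys = [] \<or> last (xs@ys) + y > 1 then 1 else 0) \<le> fst (run A (xs @ ys @ [y]))"
    using run_step[OF va _ k1, of "xs@ys" y] snoc.prems(1) by simp
  show ?case
  proof (cases "ys = []")
    case True
    show ?thesis
    proof (cases "xs = []")
      case True
      then show ?thesis using st \<open>ys = []\<close> by simp
    next
      case False
      then show ?thesis using st \<open>ys = []\<close> by simp
    qed
  next
    case False
    define n where "n = length ys - 1"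
    have n: "Suc n = length ys" using False n_def by simp
    have "(ys@[y]) ! n + (ys@[y]) ! (Suc n) > 1"
      using snoc.prems(2)[rule_format, of n] n by simp
    then have "ys ! n + y > 1" using n by (simp add: nth_append)
    moreover have "last (xs@ys) = ys ! n"
    proof -
      have "last (xs@ys) = last ys" using False by simp
      also have "\<dots> = ys ! n" using False by (simp add: last_conv_nth n_def)
      finally show ?thesis .
    qed
    ultimately have "last (xs@ys) + y > 1" by simp
    then have "fst (run A (xs@ys)) + 1 \<le> fst (run A (xs @ ys @ [y]))" using st by simp
    then show ?thesis using IH False by (cases "xs = []") auto
  qed
qed



definition uu :: "nat \<Rightarrow> real" where "uu m = 1 / (8 * real m)"
definition chn :: "nat \<Rightarrow> nat \<Rightarrow> real" where
  "chn m p = (if even p then 1/2 + real (p+2) * uu m else 1/2 - real p * uu m)"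
definition inst :: "nat \<Rightarrow> nat \<Rightarrow> real list" where
  "inst k m = replicate (m*(k-2)) (uu m / real k) @ map (chn m) [0..<2*m-2]"

lemma uu_pos: "0 < m \<Longrightarrow> 0 < uu m" by (simp add: uu_def)

lemma chn_consec: "0 < m \<Longrightarrow> chn m p + chn m (Suc p) > 1"
  using uu_pos[of m] by (auto simp: chn_def algebra_simps)

lemma chn_pos: assumes "0 < m" "p \<le> 2*m" shows "0 < chn m p \<and> chn m p \<le> 1"
proof -
  have "real p * uu m \<le> 1/4" "real (p+2) * uu m \<le> 1/2"
    using assms by (auto simp: uu_def field_simps)
  moreover have "0 \<le> real p * uu m" "0 \<le> real (p+2) * uu m" using uu_pos[of m] assms(1) by auto
  ultimately show ?thesis by (auto simp: chn_def)
qed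

lemma inst_len: "length (inst k m) = m*(k-2) + (2*m-2)" by (simp add: inst_def)

lemma inst_nth1: "i < m*(k-2) \<Longrightarrow> inst k m ! i = uu m / real k"
  by (simp add: inst_def nth_append)

lemma inst_nth2: "p < 2*m-2 \<Longrightarrow> inst k m ! (m*(k-2) + p) = chn m p"
  by (simp add: inst_def nth_append)

lemma inst_valid: assumes "0 < m" "1 \<le> k" shows "valid_items (inst k m)"
proof -
  have "1 * 1 \<le> real k * (real m * 8)" using assms by (intro mult_mono) auto
  then have "0 < uu m / real k \<and> uu m / real k \<le> 1"
    using assms by (auto simp: uu_def field_simps)
  moreover have "\<forall>p < 2*m-2. 0 < chn m p \<and> chn m p \<le> 1" using chn_pos[OF assms(1)] by auto
  ultimately show ?thesis by (auto simp: valid_items_def inst_def)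
qed

lemma inst_feasible:
  assumes m: "2 \<le> m" and k: "2 \<le> k"
  shows "feasible_packing k (inst k m) m"
proof -
  define T where "T = m*(k-2)"
  define n where "n = T + (2*m-2)"
  define hh :: "nat \<Rightarrow> nat" where "hh p = (if even p then p div 2 + 1 else p div 2)" for p
  define f where "f i = (if i < T then i div (k-2) else hh (i - T))" for i
  define I where "I = inst k m"
  have lenI: "length I = n" by (simp add: I_def n_def T_def inst_len)
  have m0: "0 < m" using m by simp
  have u0: "0 < uu m" using uu_pos[OF m0] .
  have range: "f i < m" if "i < n" for i
  proof (cases "i < T")
    case True
    then have "k - 2 > 0" unfolding T_def by (cases "k-2") auto
    then have "i div (k-2) < m" using True unfolding T_def by (simp add: div_less_iff_less_mult)
    then show ?thesis using True by (simp add: f_def)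
  next
    case False
    then have "i - T < 2*m-2" using that n_def by simp
    then show ?thesis using False by (auto simp: f_def hh_def)
  qed
  have bins: "(\<Sum>i\<in>{i. i < length I \<and> f i = j}. I ! i) \<le> 1 \<and> card {i. i < length I \<and> f i = j} \<le> k"
    if j: "j < m" for j
  proof -
    define Sa where "Sa = {i. i < T \<and> i div (k-2) = j}"
    define Sb where "Sb = {i. T \<le> i \<and> i < n \<and> hh (i-T) = j}"
    define Q where "Q = (if j = 0 then {T+1} else {T+2*j+1, T+2*j-2})"
    have S: "{i. i < length I \<and> f i = j} = Sa \<union> Sb"
      unfolding Sa_def Sb_def lenI f_def n_def by auto
    have disj: "Sa \<inter> Sb = {}" unfolding Sa_def Sb_def by auto
    have SaI: "Sa \<subseteq> {j*(k-2) ..< j*(k-2) + (k-2)}"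
    proof
      fix i assume "i \<in> Sa"
      then have i: "i < T" "i div (k-2) = j" unfolding Sa_def by auto
      then have "k - 2 > 0" unfolding T_def by (cases "k-2") auto
      then have "i mod (k-2) < k-2" by simp
      moreover have "i = (i div (k-2))*(k-2) + i mod (k-2)" by (rule div_mult_mod_eq[symmetric])
      ultimately show "i \<in> {j*(k-2) ..< j*(k-2) + (k-2)}"
        using i(2) by (metis add_less_cancel_left atLeastLessThan_iff le_add1)
    qed
    have finSa: "finite Sa" unfolding Sa_def by auto
    have cSa: "card Sa \<le> k - 2" using card_mono[OF _ SaI] by simp
    have SbQ: "Sb \<subseteq> Q"
    proof
      fix i assume "i \<in> Sb"
      then have i: "T \<le> i" "hh (i - T) = j" unfolding Sb_def by auto
      show "i \<in> Q"
      proof (cases "even (i - T)")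
        case True
        then have "i - T = 2*j - 2" "j \<noteq> 0" using i by (auto simp: hh_def elim!: evenE)
        then show ?thesis using i by (simp add: Q_def; linarith)
      next
        case False
        then obtain q where q: "i - T = 2*q + 1" using oddE by blast
        then have "hh (i - T) = q" by (simp add: hh_def)
        then have "i - T = 2*j + 1" using i q by simp
        then show ?thesis using i by (simp add: Q_def; linarith)
      qed
    qed
    have finQ: "finite Q" unfolding Q_def by auto
    have cQ: "card Q \<le> 2" unfolding Q_def by (auto simp: card_insert_if)
    have cSb: "card Sb \<le> 2" using card_mono[OF finQ SbQ] cQ by simp
    have finSb: "finite Sb" using finite_subset[OF SbQ finQ] .
    have sumSa: "(\<Sum>i\<in>Sa. I ! i) = real (card Sa) * (uu m / real k)"
    proof -
      have "(\<Sum>i\<in>Sa. I ! i) = (\<Sum>i\<in>Sa. uu m / real k)"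
        by (rule sum.cong) (auto simp: Sa_def I_def T_def inst_nth1)
      then show ?thesis by simp
    qed
    define g where "g i = chn m (i - T)" for i
    have sumSb1: "(\<Sum>i\<in>Sb. I ! i) = (\<Sum>i\<in>Sb. g i)"
    proof (rule sum.cong)
      fix i assume "i \<in> Sb"
      then have "T \<le> i" "i - T < 2*m-2" unfolding Sb_def n_def by auto
      then show "I ! i = g i" using inst_nth2[of "i - T" m k] unfolding I_def g_def T_def by simp
    qed simp
    have gQ: "0 \<le> g i" if "i \<in> Q" for i
    proof -
      have "i - T \<le> 2*m" using that j unfolding Q_def by (auto split: if_splits)
      then show ?thesis using chn_pos[OF m0] unfolding g_def by (simp add: less_imp_le)
    qed
    have "(\<Sum>i\<in>Sb. g i) \<le> (\<Sum>i\<in>Q. g i)"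
      by (rule sum_mono2[OF finQ SbQ]) (auto intro: gQ)
    also have "(\<Sum>i\<in>Q. g i) \<le> 1 - uu m"
    proof (cases "j = 0")
      case True
      then show ?thesis using u0 by (simp add: Q_def g_def chn_def)
    next
      case False
      then have "(\<Sum>i\<in>Q. g i) = g (T+2*j+1) + g (T+2*j-2)" unfolding Q_def by simp
      also have "\<dots> = 1 - uu m" using False by (simp add: g_def chn_def algebra_simps of_nat_diff)
      finally show ?thesis by simp
    qed
    finally have sumSb: "(\<Sum>i\<in>Sb. I ! i) \<le> 1 - uu m" using sumSb1 by simp
    have "real (card Sa) * (uu m / real k) \<le> real (k-2) * (uu m / real k)"
      using cSa u0 k by (intro mult_right_mono) auto
    also have "\<dots> \<le> uu m" using k u0 by (simp add: field_simps of_nat_diff)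
    finally have "(\<Sum>i\<in>Sa. I ! i) \<le> uu m" using sumSa by simp
    then have "(\<Sum>i\<in>Sa \<union> Sb. I ! i) \<le> 1"
      using sumSb sum.union_disjoint[OF finSa finSb disj, of "(!) I"] by simp
    moreover have "card (Sa \<union> Sb) \<le> k"
      using card_Un_disjoint[OF finSa finSb disj] cSa cSb k by simp
    ultimately show ?thesis using S by simp
  qed
  show ?thesis unfolding feasible_packing_def
    using range bins lenI I_def by blast
qed


lemma inst_infeasible:
  assumes m: "2 \<le> m" and k: "2 \<le> k" and fp: "feasible_packing k (inst k m) m'"
  shows "m \<le> m'"
proof -
  define T where "T = m*(k-2)"
  define I where "I = inst k m"
  have m0: "0 < m" using m by simp
  have u0: "0 < uu m" using uu_pos[OF m0] .
  obtain f where f1: "\<forall>i<length I. f i < m'"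
    and f2: "\<forall>j<m'. (\<Sum>i\<in>{i. i < length I \<and> f i = j}. I ! i) \<le> 1"
    using fp unfolding feasible_packing_def I_def by blast
  have vI: "valid_items I" unfolding I_def using inst_valid[OF m0] k by simp
  have pos: "0 < I ! i" if "i < length I" for i using vI that by (auto simp: valid_items_def)
  define X where "X = insert (T+1) ((\<lambda>i. T + 2*i) ` {..<m-1})"
  have lenI: "length I = T + (2*m-2)" by (simp add: I_def T_def inst_len)
  have Xlen: "a < length I" if "a \<in> X" for a using that m unfolding X_def lenI by auto
  have Xval: "I ! a = chn m (a - T)" if "a \<in> X" for a
  proof -
    have "a - T < 2*m-2" "T \<le> a" using that m unfolding X_def by auto
    then show ?thesis using inst_nth2[of "a - T" m k] unfolding I_def T_def by simp
  qed
  have big: "I ! a + I ! b > 1" if "a \<in> X" "b \<in> X" "a \<noteq> b" for a b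
  proof -
    have e: "chn m (x*2) > 1/2 + uu m" for x
    proof -
      have "real (x*2+2) * uu m \<ge> 2 * uu m" using u0 by (intro mult_right_mono) auto
      then show ?thesis using u0 by (simp add: chn_def)
    qed
    have o: "chn m (Suc 0) = 1/2 - uu m" by (simp add: chn_def)
    have cv: "chn m (a - T) = 1/2 - uu m \<or> chn m (a - T) > 1/2 + uu m" if "a \<in> X" for a
      using that e o unfolding X_def by (auto simp: mult.commute)
    have "chn m (a - T) > 1/2 + uu m \<or> chn m (b - T) > 1/2 + uu m"
    proof (rule ccontr)
      assume "\<not> ?thesis"
      then have "a = T + 1" "b = T + 1" using that(1,2) e unfolding X_def by (auto simp: mult.commute)
      then show False using that(3) by simp
    qed
    then show ?thesis using cv[OF that(1)] cv[OF that(2)] Xval[OF that(1)] Xval[OF that(2)] u0 by auto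
  qed
  have inj: "inj_on f X"
  proof (rule inj_onI, rule ccontr)
    fix a b assume ab: "a \<in> X" "b \<in> X" "f a = f b" "a \<noteq> b"
    define j where "j = f a"
    have j: "j < m'" using f1 Xlen[OF ab(1)] j_def by simp
    define S where "S = {i. i < length I \<and> f i = j}"
    have sub: "{a, b} \<subseteq> S" using Xlen[OF ab(1)] Xlen[OF ab(2)] ab(3) by (simp add: S_def j_def)
    have "I ! a + I ! b = (\<Sum>i\<in>{a,b}. I ! i)" using ab(4) by simp
    also have "\<dots> \<le> (\<Sum>i\<in>S. I ! i)"
      by (rule sum_mono2[OF _ sub]) (auto simp: S_def intro: less_imp_le pos)
    also have "\<dots> \<le> 1" using f2 j unfolding S_def by blast
    finally show False using big[OF ab(1,2,4)] by simp
  qed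
  have cX: "card X = m"
  proof -
    have "inj_on (\<lambda>i. T + 2*i) {..<m-1}" by (auto intro: inj_onI)
    then have "card ((\<lambda>i. T + 2*i) ` {..<m-1}) = m - 1" by (simp add: card_image)
    moreover have "T + 1 \<notin> (\<lambda>i. T + 2*i) ` {..<m-1}" by (auto simp: image_iff)
    ultimately show ?thesis using m unfolding X_def by simp
  qed
  have "f ` X \<subseteq> {..<m'}" using f1 Xlen by auto
  then have "card X \<le> card {..<m'}" using card_inj_on_le[OF inj, of "{..<m'}"] by simp
  then show ?thesis using cX by simp
qed

lemma inst_OPT: assumes "2 \<le> m" "2 \<le> k" shows "OPT k (inst k m) = m"
  unfolding OPT_def
  by (rule Least_equality) (use inst_feasible[OF assms] inst_infeasible[OF assms] in auto)


theorem theorem14: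
  fixes k m :: nat and A :: online_alg
  assumes "k \<ge> 2" and "valid_alg k A" and "m \<ge> 3"
  shows "\<exists>I. valid_items I \<and> OPT k I = m \<and>
           (k = 2 \<longrightarrow> real (ALG A I) \<ge> 2 * real (OPT k I) - 2) \<and>
           (k \<ge> 3 \<longrightarrow> real (ALG A I) \<ge> (3 - 2 / real k) * real (OPT k I) - 5 + 5 / real k)"
proof -
  have k: "2 \<le> k" and m: "2 \<le> m" and k1: "1 \<le> k" using assms by auto
  define xs where "xs = replicate (m*(k-2)) (uu m / real k)"
  define ys where "ys = map (chn m) [0..<2*m-2]"
  define I where "I = inst k m"
  have I: "I = xs @ ys" by (simp add: I_def xs_def ys_def inst_def)
  have vI: "valid_items I" unfolding I_def using inst_valid[of m k] m k by simp
  have opt: "OPT k I = m" unfolding I_def using inst_OPT[OF m k] .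
  have cons: "\<forall>i. Suc i < length ys \<longrightarrow> ys!i + ys!Suc i > 1"
    using chn_consec[of m] m by (auto simp: ys_def)
  have ch: "fst (run A xs) + (2*m-2) \<le> ALG A I + (if xs = [] \<or> ys = [] then 0 else 1)"
    using run_chain[OF assms(2) k1, of xs ys] vI cons by (simp add: I ALG_def ys_def)
  have A2: "real (ALG A I) \<ge> 2 * real m - 2" if "k = 2"
  proof -
    have "xs = []" using that by (simp add: xs_def)
    then have "2*m - 2 \<le> ALG A I" using ch by (simp add: run_def)
    then show ?thesis using m by linarith
  qed
  have A3: "real (ALG A I) \<ge> (3 - 2 / real k) * real m - 5 + 5 / real k" if k3: "k \<ge> 3"
  proof -
    have vxs: "valid_items xs" using vI valid_items_appendD I by blast
    have len: "m*(k-2) \<le> fst (run A xs) * k" using run_len[OF assms(2) vxs k1] by (simp add: xs_def)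
    have "xs \<noteq> []" "ys \<noteq> []" using k3 m by (auto simp: xs_def ys_def)
    then have ch2: "fst (run A xs) + (2*m-2) \<le> ALG A I + 1" using ch by simp
    define b where "b = real (fst (run A xs))"
    define a where "a = real (ALG A I)"
    have h1: "real m * (real k - 2) \<le> b * real k" using len k3 unfolding b_def
      by (metis of_nat_diff of_nat_le_iff of_nat_mult of_nat_numeral k)
    have h2: "b + 2 * real m - 2 \<le> a + 1" using ch2 m unfolding a_def b_def by linarith
    have "(b + 2 * real m - 3) * real k \<le> a * real k" using h2 by (intro mult_right_mono) auto
    then have "a * real k \<ge> real m * (real k - 2) + (2 * real m - 3) * real k"
      using h1 by (simp add: algebra_simps)
    moreover have "real k \<ge> 3" using k3 by simp
    ultimately have "a * real k \<ge> (3 * real k - 2) * real m - 5 * real k + 5"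
      by (simp add: algebra_simps)
    then show ?thesis unfolding a_def using k3 by (simp add: field_simps)
  qed
  show ?thesis using vI opt A2 A3 by (intro exI[of _ I]) auto
qed

end
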